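(* Let $m\ge2$, $n\ge2$, let $c\in\mathbb{R}_{\ge0}^{m\times n}$ and let $B=(B_1,\dots,B_m)$ be any allocation of $[n]$ to $[m]$, with $M=\max_{\ell\in[m]}c_\ell(B_\ell)$. Then there exists an allocation $A=(A_1,\dots,A_m)$ such that (i) $\sum_{i\in[m]}c_i(A_i)\le\frac1m\sum_{i\in[m]}c_i([n])$ and (ii) $\max_{\ell\in[m]}c_\ell(A_\ell)\le\frac32 M$. Moreover, for such $A$, setting $p_i=c_i(A_i)-\frac1m c_i([n])$ for all $i$ yields $c_i(A_i)-p_i\le\frac1m\sum_{j\in[m]}(c_i(A_j)-p_j)$ for all $i\in[m]$.
   Context: Notation: $[k]=\{1,\dots,k\}$. For a cost matrix $c\in\mathbb{R}_{\ge0}^{m\times n}$ (rows = machines, columns = jobs) and $S\subseteq[n]$, $c_i(S)=\sum_{j\in S}c_{i,j}$. An allocation is a tuple $(X_1,\dots,X_m)$ of pairwise disjoint subsets of $[n]$ with union $[n]$. *)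

theory Defs
  imports Complex_Main
begin

text \<open>Machines are indexed by {1..m}, jobs by {1..n}. A cost matrix is
  c :: nat \<Rightarrow> nat \<Rightarrow> real, with c i j the cost of job j on machine i.\<close>

definition cost :: "(nat \<Rightarrow> nat \<Rightarrow> real) \<Rightarrow> nat \<Rightarrow> nat set \<Rightarrow> real" where
  "cost c i S = (\<Sum>j\<in>S. c i j)"

definition is_allocation :: "nat \<Rightarrow> nat \<Rightarrow> (nat \<Rightarrow> nat set) \<Rightarrow> bool" where
  "is_allocation m n X \<longleftrightarrow>
     (\<forall>i\<in>{1..m}. \<forall>k\<in>{1..m}. i \<noteq> k \<longrightarrow> X i \<inter> X k = {}) \<and>
     (\<Union>i\<in>{1..m}. X i) = {1..n}"

definition makespan :: "nat \<Rightarrow> (nat \<Rightarrow> nat \<Rightarrow> real) \<Rightarrow> (nat \<Rightarrow> nat set) \<Rightarrow> real" where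
  "makespan m c X = Max ((\<lambda>l. cost c l (X l)) ` {1..m})"

end

theory Submission
  imports Defs
begin


lemma sig_uniq0: fixes m b b' a :: nat assumes "0 < m" "b \<in> {1..m}" "b' \<in> {1..m}" "(a + b) mod m = (a + b') mod m" "b \<le> b'"
  shows "b = b'"
proof -
  have "m dvd (a + b') - (a + b)" using assms(4,5) mod_eq_dvd_iff_nat[of "a+b" "a+b'" m] by simp
  hence "m dvd b' - b" by simp
  moreover have "b' - b < m" using assms by auto
  ultimately have "b' - b = 0" using dvd_imp_le by fastforce 
  thus ?thesis using assms(5) by simp
qed

lemma sig_uniq: fixes m b b' a :: nat assumes "0 < m" "b \<in> {1..m}" "b' \<in> {1..m}" "(a + b) mod m = (a + b') mod m"
  shows "b = b'"
  using sig_uniq0[OF assms] sig_uniq0[of m b' b a] assms by (metis nat_le_linear)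

lemma sig_ex: fixes m r a :: nat assumes "0 < m" "r < m" shows "\<exists>b. b \<in> {1..m} \<and> (a + b) mod m = r"
proof -
  define x where "x = (r + m - a mod m) mod m"
  have x: "(a + x) mod m = r"
  proof -
    have "(a + x) mod m = (a mod m + (r + m - a mod m)) mod m" unfolding x_def by (metis mod_add_eq mod_mod_trivial)
    also have "a mod m + (r + m - a mod m) = r + m" using assms mod_less_divisor[of m a] by linarith
    finally show ?thesis using assms by simp
  qed
  show ?thesis
  proof (cases "x = 0")
    case True thus ?thesis using x assms by (intro exI[of _ m]) auto
  next
    case False
    have "x < m" unfolding x_def using assms by simp
    thus ?thesis using x False by (intro exI[of _ x]) auto
  qed
qed

definition sig :: "nat \<Rightarrow> nat \<Rightarrow> nat \<Rightarrow> nat" where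
  "sig m r a = (THE b. b \<in> {1..m} \<and> (a + b) mod m = r)"

lemma sig_prop: assumes "0 < m" "r < m"
  shows "sig m r a \<in> {1..m} \<and> (a + sig m r a) mod m = r"
proof -
  have "\<exists>!b. b \<in> {1..m} \<and> (a + b) mod m = r"
    using sig_ex[OF assms, of a] sig_uniq[OF assms(1)] by metis
  thus ?thesis unfolding sig_def by (rule theI')
qed

lemma sig_eqI: assumes "0 < m" "r < m" "b \<in> {1..m}" "(a + b) mod m = r"
  shows "sig m r a = b"
  using sig_prop[OF assms(1,2), of a] sig_uniq[OF assms(1), of "sig m r a" b a] assms by auto

lemma sig_invol: assumes "0 < m" "r < m" "a \<in> {1..m}"
  shows "sig m r (sig m r a) = a"
  using sig_prop[OF assms(1,2), of a] assms by (intro sig_eqI) (auto simp: add.commute)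

lemma sig_bij: assumes "0 < m" "a \<in> {1..m}"
  shows "bij_betw (\<lambda>r. sig m r a) {..<m} {1..m}"
proof (rule bij_betwI')
  fix r r' assume "r \<in> {..<m}" "r' \<in> {..<m}"
  hence h: "(a + sig m r a) mod m = r" "(a + sig m r' a) mod m = r'"
    using sig_prop[OF assms(1), of r a] sig_prop[OF assms(1), of r' a] by auto
  show "(sig m r a = sig m r' a) = (r = r')"
  proof
    assume "sig m r a = sig m r' a"
    thus "r = r'" using h by metis
  qed simp
next
  fix r assume "r \<in> {..<m}" thus "sig m r a \<in> {1..m}" using sig_prop[OF assms(1)] by auto
next
  fix b assume "b \<in> {1..m}"
  thus "\<exists>r\<in>{..<m}. b = sig m r a"
    using assms by (intro bexI[of _ "(a+b) mod m"]) (auto intro: sig_eqI[symmetric])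
qed



lemma cost_union: "finite S \<Longrightarrow> finite T \<Longrightarrow> S \<inter> T = {} \<Longrightarrow> cost c i (S \<union> T) = cost c i S + cost c i T"
  unfolding cost_def by (rule sum.union_disjoint)

definition pX :: "(nat \<Rightarrow> nat \<Rightarrow> real) \<Rightarrow> (nat \<Rightarrow> nat set) \<Rightarrow> real \<Rightarrow> nat \<Rightarrow> nat \<Rightarrow> nat set" where
  "pX c B M a b = (if a = b then B a
     else if cost c a (B b) \<le> 3/2*M \<and> cost c b (B a) \<le> 3/2*M then B b
     else if cost c b (B a) > 3/2*M \<and> cost c a (B b) < M/2 then B a \<union> B b
     else if cost c a (B b) > 3/2*M \<and> cost c b (B a) < M/2 then {}
     else B a)"

lemma pX_props:
  assumes "a \<noteq> b" "B a \<inter> B b = {}" "finite (B a)" "finite (B b)"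
    "0 \<le> cost c a (B a)" "cost c a (B a) \<le> M" "0 \<le> cost c b (B b)" "cost c b (B b) \<le> M"
    "0 \<le> cost c a (B b)" "0 \<le> cost c b (B a)"
  shows "pX c B M a b \<union> pX c B M b a = B a \<union> B b"
    and "pX c B M a b \<inter> pX c B M b a = {}"
    and "cost c a (pX c B M a b) \<le> 3/2*M"
    and "cost c a (pX c B M a b) + cost c b (pX c B M b a) \<le> cost c a (B b) + cost c b (B a)"
proof -
  have ab: "b \<noteq> a" using assms(1) by auto
  have cu: "cost c a (B a \<union> B b) = cost c a (B a) + cost c a (B b)"
           "cost c b (B b \<union> B a) = cost c b (B b) + cost c b (B a)"
    using cost_union assms(2,3,4) by (auto simp: Int_commute)
  have e: "cost c i {} = 0" for i unfolding cost_def by simp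
  show "pX c B M a b \<union> pX c B M b a = B a \<union> B b"
    unfolding pX_def using assms ab by auto
  show "pX c B M a b \<inter> pX c B M b a = {}"
    unfolding pX_def using assms ab by auto
  show "cost c a (pX c B M a b) \<le> 3/2*M"
    unfolding pX_def using assms cu e by auto
  show "cost c a (pX c B M a b) + cost c b (pX c B M b a) \<le> cost c a (B b) + cost c b (B a)"
  proof -
    let ?Th = "3/2*M"
    have M0: "0 \<le> M" using assms(5,6) by linarith
    have cu2: "cost c b (B a \<union> B b) = cost c b (B b) + cost c b (B a)" using cu(2) by (simp add: Un_commute)
    consider (c2) "cost c a (B b) \<le> ?Th \<and> cost c b (B a) \<le> ?Th"
      | (c3) "\<not> (cost c a (B b) \<le> ?Th \<and> cost c b (B a) \<le> ?Th)" "cost c b (B a) > ?Th \<and> cost c a (B b) < M/2"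
      | (c4) "\<not> (cost c a (B b) \<le> ?Th \<and> cost c b (B a) \<le> ?Th)" "\<not> (cost c b (B a) > ?Th \<and> cost c a (B b) < M/2)"
             "cost c a (B b) > ?Th \<and> cost c b (B a) < M/2"
      | (c5) "\<not> (cost c a (B b) \<le> ?Th \<and> cost c b (B a) \<le> ?Th)" "\<not> (cost c b (B a) > ?Th \<and> cost c a (B b) < M/2)"
             "\<not> (cost c a (B b) > ?Th \<and> cost c b (B a) < M/2)"
      by blast
    thus ?thesis
    proof cases
      case c2
      hence "pX c B M a b = B b" "pX c B M b a = B a" unfolding pX_def using ab by auto
      thus ?thesis by simp
    next
      case c3
      hence "pX c B M a b = B a \<union> B b" "pX c B M b a = {}" unfolding pX_def using ab M0 by auto
      thus ?thesis using cu e c3 assms(6) M0 by simp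
    next
      case c4
      hence "pX c B M a b = {}" "pX c B M b a = B a \<union> B b" unfolding pX_def using ab M0 by auto
      thus ?thesis using cu2 e c4 assms(8) M0 by simp
    next
      case c5
      hence "pX c B M a b = B a" "pX c B M b a = B b" unfolding pX_def using ab by auto
      thus ?thesis using c5 assms(5-10) by auto
    qed
  qed
qed



lemma alloc_sub: "is_allocation m n X \<Longrightarrow> i \<in> {1..m} \<Longrightarrow> X i \<subseteq> {1..n}"
  unfolding is_allocation_def by blast

lemma alloc_disj: "is_allocation m n X \<Longrightarrow> i \<in> {1..m} \<Longrightarrow> k \<in> {1..m} \<Longrightarrow> i \<noteq> k \<Longrightarrow> X i \<inter> X k = {}"
  unfolding is_allocation_def by blast

lemma cost_nonneg: "\<forall>j\<in>{1..n}. c i j \<ge> 0 \<Longrightarrow> S \<subseteq> {1..n} \<Longrightarrow> 0 \<le> cost c i S"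
  unfolding cost_def by (rule sum_nonneg) auto

lemma cost_alloc_total:
  assumes "is_allocation m n X"
  shows "cost c i {1..n} = (\<Sum>k\<in>{1..m}. cost c i (X k))"
proof -
  have "{1..n} = (\<Union>k\<in>{1..m}. X k)" using assms unfolding is_allocation_def by blast
  hence "cost c i {1..n} = sum (c i) (\<Union>k\<in>{1..m}. X k)" unfolding cost_def by simp
  also have "\<dots> = (\<Sum>k\<in>{1..m}. sum (c i) (X k))"
  proof (rule sum.UNION_disjoint)
    show "\<forall>k\<in>{1..m}. finite (X k)" using alloc_sub[OF assms] by (meson finite_atLeastAtMost finite_subset)
    show "\<forall>k\<in>{1..m}. \<forall>l\<in>{1..m}. k \<noteq> l \<longrightarrow> X k \<inter> X l = {}" using alloc_disj[OF assms] by blast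
  qed simp
  finally show ?thesis unfolding cost_def .
qed

lemma makespan_ge: "i \<in> {1..m} \<Longrightarrow> cost c i (X i) \<le> makespan m c X"
  unfolding makespan_def by (rule Max_ge) auto

lemma makespan_le: "m \<ge> 1 \<Longrightarrow> (\<forall>i\<in>{1..m}. cost c i (X i) \<le> t) \<Longrightarrow> makespan m c X \<le> t"
  unfolding makespan_def by (subst Max_le_iff) auto

lemma part2:
  assumes m: "m \<ge> 1" and A: "is_allocation m n A"
    and S: "(\<Sum>i\<in>{1..m}. cost c i (A i)) \<le> (1 / real m) * (\<Sum>i\<in>{1..m}. cost c i {1..n})"
  shows "(let p = (\<lambda>i. cost c i (A i) - (1 / real m) * cost c i {1..n}) in
                 \<forall>i\<in>{1..m}. cost c i (A i) - p i
                    \<le> (1 / real m) * (\<Sum>j\<in>{1..m}. cost c i (A j) - p j))"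
proof -
  define p where "p = (\<lambda>i. cost c i (A i) - (1 / real m) * cost c i {1..n})"
  have sp: "(\<Sum>j\<in>{1..m}. p j) \<le> 0"
    using S unfolding p_def by (simp add: sum_subtractf sum_distrib_left)
  have "\<forall>i\<in>{1..m}. cost c i (A i) - p i \<le> (1 / real m) * (\<Sum>j\<in>{1..m}. cost c i (A j) - p j)"
  proof
    fix i assume "i \<in> {1..m}"
    have "(\<Sum>j\<in>{1..m}. cost c i (A j) - p j) = cost c i {1..n} - (\<Sum>j\<in>{1..m}. p j)"
      using cost_alloc_total[OF A] by (simp add: sum_subtractf)
    also have "\<dots> \<ge> cost c i {1..n}" using sp by simp
    finally have "(1/real m) * cost c i {1..n} \<le> (1/real m) * (\<Sum>j\<in>{1..m}. cost c i (A j) - p j)"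
      using m by (intro mult_left_mono) auto
    thus "cost c i (A i) - p i \<le> (1 / real m) * (\<Sum>j\<in>{1..m}. cost c i (A j) - p j)"
      unfolding p_def by simp
  qed
  thus ?thesis unfolding p_def[symmetric] Let_def .
qed



lemma part1:
  fixes m n :: nat and c :: "nat \<Rightarrow> nat \<Rightarrow> real" and B :: "nat \<Rightarrow> nat set"
  assumes m: "m \<ge> 1"
    and cnn: "\<forall>i\<in>{1..m}. \<forall>j\<in>{1..n}. c i j \<ge> 0"
    and B: "is_allocation m n B"
  shows "\<exists>A. is_allocation m n A
            \<and> (\<Sum>i\<in>{1..m}. cost c i (A i)) \<le> (1 / real m) * (\<Sum>i\<in>{1..m}. cost c i {1..n})
            \<and> makespan m c A \<le> 3 / 2 * makespan m c B"
proof -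
  define M where "M = makespan m c B"
  define F where "F a b = cost c a (pX c B M a b)" for a b
  define A where "A r a = pX c B M a (sig m r a)" for r a
  have m0: "0 < m" using m by simp
  have fin: "finite (B a)" if "a \<in> {1..m}" for a
    using alloc_sub[OF B that] by (meson finite_atLeastAtMost finite_subset)
  have nn: "0 \<le> cost c a (B b)" if "a \<in> {1..m}" "b \<in> {1..m}" for a b
    using cost_nonneg[of n c a "B b"] cnn that alloc_sub[OF B] by blast
  have le: "cost c a (B a) \<le> M" if "a \<in> {1..m}" for a
    using makespan_ge[OF that] unfolding M_def .
  have props: "pX c B M a b \<union> pX c B M b a = B a \<union> B b \<and>
     pX c B M a b \<inter> pX c B M b a = {} \<and> cost c a (pX c B M a b) \<le> 3/2*M \<and>
     F a b + F b a \<le> cost c a (B b) + cost c b (B a)"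
    if "a \<in> {1..m}" "b \<in> {1..m}" "a \<noteq> b" for a b
    using pX_props[OF that(3) alloc_disj[OF B that] fin[OF that(1)] fin[OF that(2)]
       nn[OF that(1) that(1)] le[OF that(1)] nn[OF that(2) that(2)] le[OF that(2)]
       nn[OF that(1,2)] nn[OF that(2,1)]] unfolding F_def by blast
  have Faa: "F a a = cost c a (B a)" for a unfolding F_def pX_def by simp
  have pair: "F a b + F b a \<le> cost c a (B b) + cost c b (B a)" if "a \<in> {1..m}" "b \<in> {1..m}" for a b
    using props[OF that] Faa by (cases "a = b") auto
  let ?I = "{1..m}"
  have "2 * (\<Sum>a\<in>?I. \<Sum>b\<in>?I. F a b) = (\<Sum>a\<in>?I. \<Sum>b\<in>?I. F a b) + (\<Sum>a\<in>?I. \<Sum>b\<in>?I. F b a)"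
    using sum.swap[of "\<lambda>a b. F a b" ?I ?I] by simp
  also have "\<dots> = (\<Sum>a\<in>?I. \<Sum>b\<in>?I. F a b + F b a)" by (simp add: sum.distrib)
  also have "\<dots> \<le> (\<Sum>a\<in>?I. \<Sum>b\<in>?I. cost c a (B b) + cost c b (B a))"
    using pair by (intro sum_mono) auto
  also have "\<dots> = (\<Sum>a\<in>?I. \<Sum>b\<in>?I. cost c a (B b)) + (\<Sum>a\<in>?I. \<Sum>b\<in>?I. cost c b (B a))"
    by (simp add: sum.distrib)
  also have "\<dots> = 2 * (\<Sum>a\<in>?I. \<Sum>b\<in>?I. cost c a (B b))"
    using sum.swap[of "\<lambda>a b. cost c b (B a)" ?I ?I] by simp
  finally have S1: "(\<Sum>a\<in>?I. \<Sum>b\<in>?I. F a b) \<le> (\<Sum>a\<in>?I. cost c a {1..n})"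
    using cost_alloc_total[OF B] by simp
  have "(\<Sum>r<m. \<Sum>a\<in>?I. cost c a (A r a)) = (\<Sum>a\<in>?I. \<Sum>r<m. F a (sig m r a))"
    unfolding A_def F_def by (rule sum.swap)
  also have "\<dots> = (\<Sum>a\<in>?I. \<Sum>b\<in>?I. F a b)"
    by (intro sum.cong refl sum.reindex_bij_betw sig_bij[OF m0]) auto
  finally have S2: "(\<Sum>r<m. \<Sum>a\<in>?I. cost c a (A r a)) \<le> (\<Sum>a\<in>?I. cost c a {1..n})"
    using S1 by simp
  define T where "T = (1 / real m) * (\<Sum>i\<in>?I. cost c i {1..n})"
  obtain r where r: "r < m" "(\<Sum>a\<in>?I. cost c a (A r a)) \<le> T"
  proof (rule ccontr)
    assume "\<not> thesis"
    hence "\<forall>r\<in>{..<m}. T < (\<Sum>a\<in>?I. cost c a (A r a))" using that by force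
    hence "(\<Sum>r<m. T) < (\<Sum>r<m. \<Sum>a\<in>?I. cost c a (A r a))"
      using m0 by (intro sum_strict_mono) auto
    moreover have "(\<Sum>r<m. T) = (\<Sum>a\<in>?I. cost c a {1..n})" unfolding T_def using m0 by simp
    ultimately show False using S2 by simp
  qed
  have sg: "sig m r a \<in> ?I" "sig m r (sig m r a) = a" if "a \<in> ?I" for a
    using sig_prop[OF m0 r(1)] sig_invol[OF m0 r(1) that] by auto
  have sub: "A r a \<subseteq> B a \<union> B (sig m r a)" if "a \<in> ?I" for a
  proof (cases "sig m r a = a")
    case True thus ?thesis unfolding A_def pX_def by simp
  next
    case False thus ?thesis using props[OF that sg(1)[OF that] False[symmetric]] unfolding A_def by blast
  qed
  have alloc: "is_allocation m n (A r)"
    unfolding is_allocation_def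
  proof (intro conjI ballI impI)
    fix i k assume ik: "i \<in> ?I" "k \<in> ?I" "i \<noteq> k"
    show "A r i \<inter> A r k = {}"
    proof (cases "sig m r i = k")
      case True
      hence "sig m r k = i" using sg(2)[OF ik(1)] by simp
      hence "A r i = pX c B M i k" "A r k = pX c B M k i" using True unfolding A_def by simp_all
      thus ?thesis using props[OF ik] by simp
    next
      case False
      have "sig m r k \<noteq> i" using False sg(2)[OF ik(2)] by auto
      moreover have "sig m r i \<noteq> sig m r k" using sg(2)[OF ik(1)] sg(2)[OF ik(2)] ik(3) by metis
      ultimately have d: "B i \<inter> B k = {}" "B i \<inter> B (sig m r k) = {}"
          "B (sig m r i) \<inter> B k = {}" "B (sig m r i) \<inter> B (sig m r k) = {}"
        using alloc_disj[OF B] ik False sg(1)[OF ik(1)] sg(1)[OF ik(2)] by metis+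
      have s1: "A r i \<subseteq> B i \<union> B (sig m r i)" and s2: "A r k \<subseteq> B k \<union> B (sig m r k)"
        using sub[OF ik(1)] sub[OF ik(2)] .
      show ?thesis
      proof (rule equals0I)
        fix x assume "x \<in> A r i \<inter> A r k"
        hence "x \<in> B i \<union> B (sig m r i)" "x \<in> B k \<union> B (sig m r k)" using s1 s2 by auto
        thus False using d by blast
      qed
    qed
  next
    show "(\<Union>i\<in>?I. A r i) = {1..n}"
    proof
      show "(\<Union>i\<in>?I. A r i) \<subseteq> {1..n}" using sub sg(1) alloc_sub[OF B] by blast
    next
      show "{1..n} \<subseteq> (\<Union>i\<in>?I. A r i)"
      proof
        fix j assume "j \<in> {1..n}"
        then obtain a where a: "a \<in> ?I" "j \<in> B a" using B unfolding is_allocation_def by blast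
        show "j \<in> (\<Union>i\<in>?I. A r i)"
        proof (cases "sig m r a = a")
          case True thus ?thesis using a unfolding A_def pX_def by auto
        next
          case False
          have e1: "A r a \<union> A r (sig m r a) = pX c B M a (sig m r a) \<union> pX c B M (sig m r a) a"
            using sg(2)[OF a(1)] unfolding A_def by simp
          have "j \<in> A r a \<union> A r (sig m r a)"
            unfolding e1 using props[OF a(1) sg(1)[OF a(1)] False[symmetric]] a(2) by simp
          thus ?thesis using a(1) sg(1)[OF a(1)] by blast
        qed
      qed
    qed
  qed
  have ms: "makespan m c (A r) \<le> 3/2 * M"
  proof (rule makespan_le[OF m], intro ballI)
    fix a assume a: "a \<in> ?I"
    show "cost c a (A r a) \<le> 3/2 * M"
    proof (cases "sig m r a = a")
      case True
      have "0 \<le> M" using nn[OF a a] le[OF a] by linarith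
      thus ?thesis using True le[OF a] unfolding A_def pX_def by simp
    next
      case False thus ?thesis using props[OF a sg(1)[OF a] False[symmetric]] unfolding A_def by blast
    qed
  qed
  show ?thesis using alloc r(2) ms unfolding T_def M_def by blast
qed


theorem mainTheorem2:
  fixes m n :: nat and c :: "nat \<Rightarrow> nat \<Rightarrow> real" and B :: "nat \<Rightarrow> nat set"
  assumes "m \<ge> 2" and "n \<ge> 2"
    and "\<forall>i\<in>{1..m}. \<forall>j\<in>{1..n}. c i j \<ge> 0"
    and "is_allocation m n B"
  shows "(\<exists>A. is_allocation m n A
            \<and> (\<Sum>i\<in>{1..m}. cost c i (A i)) \<le> (1 / real m) * (\<Sum>i\<in>{1..m}. cost c i {1..n})
            \<and> makespan m c A \<le> 3 / 2 * makespan m c B)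
       \<and> (\<forall>A. is_allocation m n A
            \<and> (\<Sum>i\<in>{1..m}. cost c i (A i)) \<le> (1 / real m) * (\<Sum>i\<in>{1..m}. cost c i {1..n})
            \<and> makespan m c A \<le> 3 / 2 * makespan m c B
            \<longrightarrow> (let p = (\<lambda>i. cost c i (A i) - (1 / real m) * cost c i {1..n}) in
                 \<forall>i\<in>{1..m}. cost c i (A i) - p i
                    \<le> (1 / real m) * (\<Sum>j\<in>{1..m}. cost c i (A j) - p j)))"
proof
  have m1: "m \<ge> 1" using assms(1) by simp
  show "\<exists>A. is_allocation m n A
            \<and> (\<Sum>i\<in>{1..m}. cost c i (A i)) \<le> (1 / real m) * (\<Sum>i\<in>{1..m}. cost c i {1..n})
            \<and> makespan m c A \<le> 3 / 2 * makespan m c B"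
    by (rule part1[OF m1 assms(3,4)])
  show "\<forall>A. is_allocation m n A
            \<and> (\<Sum>i\<in>{1..m}. cost c i (A i)) \<le> (1 / real m) * (\<Sum>i\<in>{1..m}. cost c i {1..n})
            \<and> makespan m c A \<le> 3 / 2 * makespan m c B
            \<longrightarrow> (let p = (\<lambda>i. cost c i (A i) - (1 / real m) * cost c i {1..n}) in
                 \<forall>i\<in>{1..m}. cost c i (A i) - p i
                    \<le> (1 / real m) * (\<Sum>j\<in>{1..m}. cost c i (A j) - p j))"
  proof (intro allI impI)
    fix A assume h: "is_allocation m n A
            \<and> (\<Sum>i\<in>{1..m}. cost c i (A i)) \<le> (1 / real m) * (\<Sum>i\<in>{1..m}. cost c i {1..n})
            \<and> makespan m c A \<le> 3 / 2 * makespan m c B"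
    show "let p = (\<lambda>i. cost c i (A i) - (1 / real m) * cost c i {1..n}) in
                 \<forall>i\<in>{1..m}. cost c i (A i) - p i
                    \<le> (1 / real m) * (\<Sum>j\<in>{1..m}. cost c i (A j) - p j)"
      using h by (intro part2[OF m1]) auto
  qed
qed

end
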